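(* Let $V$ be a finite-dimensional complex vector space with a Hermitian inner product and norm $\|\cdot\|$, let $\mathbf G$ be a finite group of unitary transformations of $V$, let $\mathbf x_0\in V$ with $\|\mathbf x_0\|=1$, fix a subgroup sequence $\{I\}=\mathbf G_0<\mathbf G_1<\cdots<\mathbf G_m=\mathbf G$ and coset leader sets $\operatorname{CL}(\mathbf G_k/\mathbf G_{k-1})$, $1\le k\le m$. If every set $\operatorname{CL}(\mathbf G_k/\mathbf G_{k-1})$ is greed compatible, then the subgroup decoding algorithm decodes robustly (and thus also correctly with some noise).
   Context: $S=\operatorname{Stab}_{\mathbf G}(\mathbf x_0)$; for a subgroup $H$, $\operatorname{Stab}_H(\mathbf x_0)=H\cap S$. Codewords are $g^{-1}\mathbf x_0$, $g\in\mathbf G$. $\operatorname{CL}(\mathbf G_k/\mathbf G_{k-1})$ is a set of representatives of the left cosets of $\mathbf G_{k-1}$ in $\mathbf G_k$ containing $I$. Subgroup decoding algorithm: given $\mathbf r\in V$, set $\mathbf r_0=\mathbf r$; for $k=1,\dots,m$ choose $d_k\in\operatorname{CL}(\mathbf G_k/\mathbf G_{k-1})$ minimizing $\|a\mathbf r_{k-1}-\mathbf x_0\|$ over $a\in\operatorname{CL}(\mathbf G_k/\mathbf G_{k-1})$ (ties broken by a fixed ordering), set $\mathbf r_k=d_k\mathbf r_{k-1}$; output $g'=d_m\cdots d_1$. It decodes robustly if for every $g\in\mathbf G$ and $\mathbf r\in V$ with $\|\mathbf r-g^{-1}\mathbf x_0\|<\|\mathbf r-h^{-1}\mathbf x_0\|$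 for all $h\notin Sg$, the output lies in $Sg$. It decodes correctly with some noise if there is $\delta>0$ such that $\|\mathbf r-g^{-1}\mathbf x_0\|<\delta$ implies the output lies in $Sg$. Fundamental region of a subgroup $H$: $\operatorname{FR}(H)=\{\mathbf x:\|\mathbf x-\mathbf x_0\|<\|h\mathbf x-\mathbf x_0\|\ \forall h\in H\setminus\operatorname{Stab}_H(\mathbf x_0)\}$. For subgroups $H\le K$, a set $\operatorname{CL}$ of left coset representatives of $H$ in $K$ is greed compatible if for every $\mathbf x\in\operatorname{FR}(H)$ there is $c\in\operatorname{CL}$ with $c\mathbf x\in\operatorname{FR}(K)$. *)

theory Defs
  imports "HOL-Analysis.Analysis"
begin

text \<open>V = complex^'n with its standard Hermitian inner product; the HOL-Analysis norm on
  complex^'n is exactly the induced Hermitian norm.\<close>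

type_synonym 'n cmat = "complex^'n^'n"

definition adjoint_mat :: "'n::finite cmat \<Rightarrow> 'n cmat" where
  "adjoint_mat A = (\<chi> i j. cnj (A $ j $ i))"

definition unitary_mat :: "'n::finite cmat \<Rightarrow> bool" where
  "unitary_mat A \<longleftrightarrow> adjoint_mat A ** A = mat 1 \<and> A ** adjoint_mat A = mat 1"

definition matinv :: "'n::finite cmat \<Rightarrow> 'n cmat" where
  "matinv A = (THE B. A ** B = mat 1 \<and> B ** A = mat 1)"

definition is_group :: "'n::finite cmat set \<Rightarrow> bool" where
  "is_group G \<longleftrightarrow> mat 1 \<in> G \<and> (\<forall>A\<in>G. \<forall>B\<in>G. A ** B \<in> G)
     \<and> (\<forall>A\<in>G. \<exists>B\<in>G. A ** B = mat 1 \<and> B ** A = mat 1)"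

definition is_subgroup :: "'n::finite cmat set \<Rightarrow> 'n cmat set \<Rightarrow> bool" where
  "is_subgroup H K \<longleftrightarrow> H \<subseteq> K \<and> is_group H"

definition Stab :: "'n::finite cmat set \<Rightarrow> complex^'n \<Rightarrow> 'n cmat set" where
  "Stab H x0 = {h \<in> H. h *v x0 = x0}"

definition left_coset :: "'n::finite cmat \<Rightarrow> 'n cmat set \<Rightarrow> 'n cmat set" where
  "left_coset c H = {c ** h | h. h \<in> H}"

definition right_coset :: "'n::finite cmat set \<Rightarrow> 'n cmat \<Rightarrow> 'n cmat set" where
  "right_coset S g = {s ** g | s. s \<in> S}"

definition coset_leaders :: "'n::finite cmat set \<Rightarrow> 'n cmat set \<Rightarrow> 'n cmat set \<Rightarrow> bool" where
  "coset_leaders CL H K \<longleftrightarrow> CL \<subseteq> K \<and> mat 1 \<in> CL \<and>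
     (\<forall>a\<in>K. \<exists>!c. c \<in> CL \<and> a \<in> left_coset c H)"

definition FR :: "'n::finite cmat set \<Rightarrow> complex^'n \<Rightarrow> (complex^'n) set" where
  "FR H x0 = {x. \<forall>h \<in> H - Stab H x0. norm (x - x0) < norm (h *v x - x0)}"

definition greed_compatible ::
  "'n::finite cmat set \<Rightarrow> 'n cmat set \<Rightarrow> 'n cmat set \<Rightarrow> complex^'n \<Rightarrow> bool" where
  "greed_compatible CL H K x0 \<longleftrightarrow> (\<forall>x \<in> FR H x0. \<exists>c\<in>CL. c *v x \<in> FR K x0)"

text \<open>Greedy choice: the element of C minimising norm (a *v x - x0), ties broken by the
  fixed ordering given by the rank function rk (injective on C).\<close>
definition greedy_choice ::
  "'n::finite cmat set \<Rightarrow> ('n cmat \<Rightarrow> nat) \<Rightarrow> complex^'n \<Rightarrow> complex^'n \<Rightarrow> 'n cmat" where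
  "greedy_choice C rk x0 x = (THE d. d \<in> C \<and> (\<forall>a\<in>C.
       norm (d *v x - x0) < norm (a *v x - x0) \<or>
       (norm (d *v x - x0) = norm (a *v x - x0) \<and> rk d \<le> rk a)))"

primrec dec_state ::
  "(nat \<Rightarrow> 'n::finite cmat set) \<Rightarrow> (nat \<Rightarrow> 'n cmat \<Rightarrow> nat) \<Rightarrow> complex^'n \<Rightarrow> complex^'n
    \<Rightarrow> nat \<Rightarrow> (complex^'n) \<times> 'n cmat" where
  "dec_state CL rk x0 r 0 = (r, mat 1)"
| "dec_state CL rk x0 r (Suc k) =
     (let (rk', gk) = dec_state CL rk x0 r k;
          d = greedy_choice (CL (Suc k)) (rk (Suc k)) x0 rk'
      in (d *v rk', d ** gk))"

definition subgroup_decode ::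
  "(nat \<Rightarrow> 'n::finite cmat set) \<Rightarrow> (nat \<Rightarrow> 'n cmat \<Rightarrow> nat) \<Rightarrow> complex^'n \<Rightarrow> nat
    \<Rightarrow> complex^'n \<Rightarrow> 'n cmat" where
  "subgroup_decode CL rk x0 m r = snd (dec_state CL rk x0 r m)"

definition decodes_robustly ::
  "'n::finite cmat set \<Rightarrow> complex^'n \<Rightarrow> (complex^'n \<Rightarrow> 'n cmat) \<Rightarrow> bool" where
  "decodes_robustly G x0 dec \<longleftrightarrow>
     (\<forall>g\<in>G. \<forall>r. (\<forall>h\<in>G. h \<notin> right_coset (Stab G x0) g \<longrightarrow>
          norm (r - matinv g *v x0) < norm (r - matinv h *v x0))
        \<longrightarrow> dec r \<in> right_coset (Stab G x0) g)"

definition decodes_correctly_with_noise ::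
  "'n::finite cmat set \<Rightarrow> complex^'n \<Rightarrow> (complex^'n \<Rightarrow> 'n cmat) \<Rightarrow> bool" where
  "decodes_correctly_with_noise G x0 dec \<longleftrightarrow>
     (\<exists>\<delta>>0. \<forall>g\<in>G. \<forall>r. norm (r - matinv g *v x0) < \<delta>
        \<longrightarrow> dec r \<in> right_coset (Stab G x0) g)"

end

theory Submission
  imports Defs
begin

lemma normsq_sum: "complex_of_real ((norm (x::complex^'n::finite))^2) = (\<Sum>i\<in>UNIV. x$i * cnj (x$i))"
proof -
  have "(norm x)^2 = (\<Sum>i\<in>UNIV. (cmod (x$i))^2)"
    unfolding norm_vec_def L2_set_def by (simp add: sum_nonneg)
  then have "complex_of_real ((norm x)^2) = (\<Sum>i\<in>UNIV. complex_of_real ((cmod (x$i))^2))"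
    by (simp only: of_real_sum)
  also have "\<dots> = (\<Sum>i\<in>UNIV. x$i * cnj (x$i))"
    by (rule sum.cong) (simp_all only: complex_norm_square)
  finally show ?thesis .
qed

lemma unitary_norm:
  fixes A :: "'n::finite cmat"
  assumes "unitary_mat A"
  shows "norm (A *v x) = norm x"
proof -
  have id: "(\<Sum>i\<in>UNIV. cnj (A$i$k) * A$i$j) = (if k = j then 1 else 0)" for k j
  proof -
    have "(adjoint_mat A ** A) $ k $ j = mat 1 $ k $ j" using assms unitary_mat_def by metis
    then show ?thesis by (simp add: matrix_matrix_mult_def adjoint_mat_def mat_def)
  qed
  have "(\<Sum>i\<in>UNIV. (A *v x)$i * cnj ((A *v x)$i))
      = (\<Sum>i\<in>UNIV. \<Sum>j\<in>UNIV. \<Sum>k\<in>UNIV. (A$i$j * x$j) * (cnj (A$i$k) * cnj (x$k)))"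
  proof (rule sum.cong[OF refl])
    fix i
    have "(A *v x)$i = (\<Sum>j\<in>UNIV. A$i$j * x$j)" by (simp add: matrix_vector_mult_def)
    then have "(A *v x)$i * cnj ((A *v x)$i) = (\<Sum>j\<in>UNIV. A$i$j * x$j) * (\<Sum>k\<in>UNIV. cnj (A$i$k) * cnj (x$k))"
      by (simp add: cnj_sum)
    then show "(A *v x)$i * cnj ((A *v x)$i) = (\<Sum>j\<in>UNIV. \<Sum>k\<in>UNIV. (A$i$j * x$j) * (cnj (A$i$k) * cnj (x$k)))"
      by (simp only: sum_product)
  qed
  also have "\<dots> = (\<Sum>j\<in>UNIV. \<Sum>i\<in>UNIV. \<Sum>k\<in>UNIV. (A$i$j * x$j) * (cnj (A$i$k) * cnj (x$k)))"
    by (rule sum.swap)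
  also have "\<dots> = (\<Sum>j\<in>UNIV. \<Sum>k\<in>UNIV. \<Sum>i\<in>UNIV. (A$i$j * x$j) * (cnj (A$i$k) * cnj (x$k)))"
    by (rule sum.cong[OF refl], rule sum.swap)
  also have "\<dots> = (\<Sum>j\<in>UNIV. \<Sum>k\<in>UNIV. x$j * cnj (x$k) * (\<Sum>i\<in>UNIV. cnj (A$i$k) * A$i$j))"
    by (simp add: sum_distrib_left mult_ac)
  also have "\<dots> = (\<Sum>j\<in>UNIV. x$j * cnj (x$j))"
    by (simp add: id if_distrib cong: if_cong)
  finally have "complex_of_real ((norm (A *v x))^2) = complex_of_real ((norm x)^2)"
    by (simp only: normsq_sum)
  then have "(norm (A *v x))^2 = (norm x)^2" using of_real_eq_iff by blast
  then show ?thesis by (simp add: power2_eq_iff_nonneg)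
qed
lemma FR_iff: "x \<in> FR K x0 \<longleftrightarrow> (\<forall>h\<in>K. h *v x0 \<noteq> x0 \<longrightarrow> norm (x - x0) < norm (h *v x - x0))"
  unfolding FR_def Stab_def by auto

lemma group_inv:
  assumes "is_group G" "A \<in> G"
  shows "matinv A \<in> G \<and> A ** matinv A = mat 1 \<and> matinv A ** A = mat 1"
proof -
  obtain B where B: "B \<in> G" "A ** B = mat 1" "B ** A = mat 1"
    using assms unfolding is_group_def by blast
  have "matinv A = B"
    unfolding matinv_def
  proof (rule the_equality)
    show "A ** B = mat 1 \<and> B ** A = mat 1" using B by simp
    fix C assume C: "A ** C = mat 1 \<and> C ** A = mat 1"
    have "C = (B ** A) ** C" using B by simp
    also have "\<dots> = B ** (A ** C)" by (simp add: matrix_mul_assoc)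
    also have "\<dots> = B" using C by simp
    finally show "C = B" .
  qed
  then show ?thesis using B by simp
qed

lemma norm_codeword:
  assumes "is_group G" "h \<in> G" "unitary_mat h"
  shows "norm (r - matinv h *v x0) = norm (h *v r - x0)"
proof -
  have "h *v (r - matinv h *v x0) = h *v r - (h ** matinv h) *v x0"
    by (simp add: matrix_vector_mult_diff_distrib matrix_vector_mul_assoc)
  also have "\<dots> = h *v r - x0" using group_inv[OF assms(1,2)] by simp
  finally show ?thesis using unitary_norm[OF assms(3), of "r - matinv h *v x0"] by simp
qed

lemma greedy_prop:
  fixes C :: "'n::finite cmat set"
  assumes "finite C" "C \<noteq> {}" "inj_on rk C"
  shows "greedy_choice C rk x0 x \<in> C \<and> (\<forall>a\<in>C. norm (greedy_choice C rk x0 x *v x - x0) \<le> norm (a *v x - x0))"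
proof -
  define f where "f a = norm (a *v x - x0)" for a
  define P where "P d \<longleftrightarrow> d \<in> C \<and> (\<forall>a\<in>C. f d < f a \<or> (f d = f a \<and> rk d \<le> rk a))" for d
  define M where "M = Min (f ` C)"
  have M: "M \<in> f ` C" "\<forall>a\<in>C. M \<le> f a" using assms M_def by auto
  define A where "A = {a\<in>C. f a = M}"
  have Afin: "finite A" "A \<noteq> {}" using assms M A_def by auto
  define R where "R = Min (rk ` A)"
  obtain d where d: "d \<in> A" "rk d = R" using Afin R_def
    by (metis (mono_tags, lifting) Min_in empty_is_image finite_imageI imageE)
  have "P d"
    unfolding P_def
  proof (intro conjI ballI)
    show "d \<in> C" using d A_def by auto
    fix a assume a: "a \<in> C"
    show "f d < f a \<or> (f d = f a \<and> rk d \<le> rk a)"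
    proof (cases "f a = M")
      case True
      then have "a \<in> A" using a A_def by auto
      then have "rk d \<le> rk a" using d R_def Afin by auto
      then show ?thesis using True d A_def by auto
    next
      case False
      then show ?thesis using M a d A_def by force
    qed
  qed
  moreover have "d' = d" if "P d'" "P d" for d' d
  proof -
    have "rk d' \<le> rk d" "rk d \<le> rk d'" "d \<in> C" "d' \<in> C" using that unfolding P_def by force+
    then show ?thesis using assms(3) by (meson antisym inj_on_eq_iff)
  qed
  ultimately have ex: "\<exists>!d. P d" by blast
  have "P (greedy_choice C rk x0 x)"
    unfolding greedy_choice_def using theI'[OF ex] unfolding P_def f_def by simp
  then show ?thesis unfolding P_def f_def by force
qed

lemma step_FR:
  assumes K: "is_group K" "\<forall>k\<in>K. unitary_mat k" and cd: "c \<in> K" "d \<in> K"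
    and cx: "c *v x \<in> FR K x0" and le: "norm (d *v x - x0) \<le> norm (c *v x - x0)"
  shows "d *v x \<in> FR K x0"
proof -
  define k0 where "k0 = d ** matinv c"
  have ci: "matinv c \<in> K" "matinv c ** c = mat 1" using group_inv[OF K(1) cd(1)] by auto
  have k0K: "k0 \<in> K" using K(1) cd ci unfolding k0_def is_group_def by blast
  have dx: "d *v x = k0 *v (c *v x)"
    by (simp add: k0_def matrix_vector_mul_assoc flip: matrix_mul_assoc) (simp add: ci)
  have stab: "k0 *v x0 = x0"
  proof (rule ccontr)
    assume "k0 *v x0 \<noteq> x0"
    then have "norm (c *v x - x0) < norm (k0 *v (c *v x) - x0)" using cx k0K FR_iff by blast
    then show False using le dx by simp
  qed
  have eqn: "norm (d *v x - x0) = norm (c *v x - x0)"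
  proof -
    have "d *v x - x0 = k0 *v (c *v x - x0)" using dx stab by (simp add: matrix_vector_mult_diff_distrib)
    then show ?thesis using unitary_norm K(2) k0K by metis
  qed
  show ?thesis
    unfolding FR_iff
  proof (intro ballI impI)
    fix h assume h: "h \<in> K" "h *v x0 \<noteq> x0"
    have hk: "h ** k0 \<in> K" using K(1) h k0K unfolding is_group_def by blast
    have "(h ** k0) *v x0 \<noteq> x0" using h stab by (simp flip: matrix_vector_mul_assoc)
    then have "norm (c *v x - x0) < norm ((h ** k0) *v (c *v x) - x0)" using cx hk FR_iff by blast
    then show "norm (d *v x - x0) < norm (h *v (d *v x) - x0)"
      using eqn dx by (simp add: matrix_vector_mul_assoc matrix_mul_assoc)
  qed
qed

theorem theoremB:
  fixes G :: "'n::finite cmat set" and x0 :: "complex^'n" and m :: nat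
    and Gs :: "nat \<Rightarrow> 'n cmat set" and CL :: "nat \<Rightarrow> 'n cmat set"
    and rk :: "nat \<Rightarrow> 'n cmat \<Rightarrow> nat"
  assumes "finite G" and "is_group G" and "\<forall>g\<in>G. unitary_mat g"
    and "norm x0 = 1"
    and "Gs 0 = {mat 1}" and "Gs m = G"
    and "\<forall>k<m. is_subgroup (Gs k) (Gs (Suc k))"
    and "\<forall>k\<in>{1..m}. coset_leaders (CL k) (Gs (k - 1)) (Gs k)"
    and "\<forall>k\<in>{1..m}. inj_on (rk k) (CL k)"
    and "\<forall>k\<in>{1..m}. greed_compatible (CL k) (Gs (k - 1)) (Gs k) x0"
  shows "decodes_robustly G x0 (subgroup_decode CL rk x0 m)
       \<and> decodes_correctly_with_noise G x0 (subgroup_decode CL rk x0 m)"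
proof -
  note fin = assms(1) and grp = assms(2) and uni = assms(3)
  have sub: "Gs k \<subseteq> G" if "k \<le> m" for k
    using that
  proof (induction k rule: inc_induct)
    case base then show ?case using assms(6) by simp
  next
    case (step n)
    then have "is_subgroup (Gs n) (Gs (Suc n))" using assms(7) by simp
    then show ?case using step.IH unfolding is_subgroup_def by blast
  qed
  have grpk: "is_group (Gs k)" if "k \<le> m" for k
  proof (cases "k < m")
    case True then show ?thesis using assms(7) unfolding is_subgroup_def by blast
  next
    case False then have "k = m" using that by simp
    then show ?thesis using assms(6) grp by simp
  qed
  have unik: "\<forall>g\<in>Gs k. unitary_mat g" if "k \<le> m" for k using sub[OF that] uni by blast
  have inv: "fst (dec_state CL rk x0 r k) \<in> FR (Gs k) x0 \<and> snd (dec_state CL rk x0 r k) \<in> Gs k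
      \<and> fst (dec_state CL rk x0 r k) = snd (dec_state CL rk x0 r k) *v r" if "k \<le> m" for k r
    using that
  proof (induction k)
    case 0
    then show ?case using assms(5) by (simp add: FR_iff)
  next
    case (Suc k)
    obtain a b where ab: "dec_state CL rk x0 r k = (a, b)" by fastforce
    have km: "k \<le> m" using Suc.prems by simp
    have IH: "a \<in> FR (Gs k) x0" "b \<in> Gs k" "a = b *v r" using Suc.IH[OF km] unfolding ab fst_conv snd_conv by blast+
    define d where "d = greedy_choice (CL (Suc k)) (rk (Suc k)) x0 a"
    have ds: "dec_state CL rk x0 r (Suc k) = (d *v a, d ** b)" using ab d_def by (simp add: Let_def)
    have k1: "Suc k \<in> {1..m}" using Suc.prems by simp
    have cl: "coset_leaders (CL (Suc k)) (Gs k) (Gs (Suc k))" using bspec[OF assms(8) k1] by simp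
    have clsub: "CL (Suc k) \<subseteq> Gs (Suc k)" "mat 1 \<in> CL (Suc k)" using cl unfolding coset_leaders_def by blast+
    have finCL: "finite (CL (Suc k))" by (rule finite_subset[OF clsub(1) finite_subset[OF sub[OF Suc.prems] fin]])
    have gp: "d \<in> CL (Suc k)" "\<forall>c\<in>CL (Suc k). norm (d *v a - x0) \<le> norm (c *v a - x0)"
    proof -
      have ne: "CL (Suc k) \<noteq> {}" using clsub by blast
      have inj: "inj_on (rk (Suc k)) (CL (Suc k))" using bspec[OF assms(9) k1] by simp
      show "d \<in> CL (Suc k)" "\<forall>c\<in>CL (Suc k). norm (d *v a - x0) \<le> norm (c *v a - x0)"
        using greedy_prop[OF finCL ne inj, of x0 a] unfolding d_def by blast+
    qed
    have gc: "greed_compatible (CL (Suc k)) (Gs k) (Gs (Suc k)) x0" using bspec[OF assms(10) k1] by simp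
    obtain c where c: "c \<in> CL (Suc k)" "c *v a \<in> FR (Gs (Suc k)) x0"
      using gc IH(1) unfolding greed_compatible_def by blast
    have dFR: "d *v a \<in> FR (Gs (Suc k)) x0"
    proof -
      have cdK: "c \<in> Gs (Suc k)" "d \<in> Gs (Suc k)" using clsub c gp by blast+
      show ?thesis using step_FR[OF grpk[OF Suc.prems] unik[OF Suc.prems] cdK c(2)] gp(2) c(1) by blast
    qed
    have "k < m" using Suc.prems by simp
    then have "is_subgroup (Gs k) (Gs (Suc k))" using assms(7) by blast
    then have bK: "b \<in> Gs (Suc k)" using IH(2) unfolding is_subgroup_def by blast
    have "d ** b \<in> Gs (Suc k)" using grpk[OF Suc.prems] bK gp clsub unfolding is_group_def by blast
    then show ?case using ds dFR IH(3) by (simp add: matrix_vector_mul_assoc)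
  qed
  have rob: "decodes_robustly G x0 (subgroup_decode CL rk x0 m)"
    unfolding decodes_robustly_def
  proof (intro ballI allI impI)
    fix g r
    assume g: "g \<in> G"
      and H: "\<forall>h\<in>G. h \<notin> right_coset (Stab G x0) g \<longrightarrow> norm (r - matinv g *v x0) < norm (r - matinv h *v x0)"
    define g' where "g' = subgroup_decode CL rk x0 m r"
    have I: "g' *v r \<in> FR G x0" "g' \<in> G"
    proof -
      have J: "fst (dec_state CL rk x0 r m) \<in> FR G x0 \<and> snd (dec_state CL rk x0 r m) \<in> G
          \<and> fst (dec_state CL rk x0 r m) = snd (dec_state CL rk x0 r m) *v r"
        using inv[of m r, OF order_refl] unfolding assms(6) .
      then show "g' *v r \<in> FR G x0" "g' \<in> G" unfolding g'_def subgroup_decode_def by metis+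
    qed
    show "subgroup_decode CL rk x0 m r \<in> right_coset (Stab G x0) g"
    proof (rule ccontr)
      assume nc: "subgroup_decode CL rk x0 m r \<notin> right_coset (Stab G x0) g"
      have "norm (g *v r - x0) < norm (g' *v r - x0)"
      proof -
        have e1: "norm (r - matinv g *v x0) = norm (g *v r - x0)" using norm_codeword[OF grp g] uni g by blast
        have e2: "norm (r - matinv g' *v x0) = norm (g' *v r - x0)" using norm_codeword[OF grp I(2)] uni I(2) by blast
        have "g' \<notin> right_coset (Stab G x0) g" using nc g'_def by simp
        then show ?thesis using H I(2) e1 e2 by metis
      qed
      define k where "k = g ** matinv g'"
      have gi: "matinv g' \<in> G" "matinv g' ** g' = mat 1" "g' ** matinv g' = mat 1"
        using group_inv[OF grp I(2)] by blast+
      have ginv: "matinv g \<in> G" "matinv g ** g = mat 1" "g ** matinv g = mat 1"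
        using group_inv[OF grp g] by blast+
      have kG: "k \<in> G" using grp g gi unfolding k_def is_group_def by blast
      have kg: "k *v (g' *v r) = g *v r"
        by (simp add: k_def matrix_vector_mul_assoc flip: matrix_mul_assoc) (simp add: gi)
      have "k *v x0 \<noteq> x0"
      proof
        assume kx: "k *v x0 = x0"
        define s where "s = g' ** matinv g"
        have sG: "s \<in> G" using grp I(2) ginv unfolding s_def is_group_def by blast
        have sk: "s ** k = mat 1"
        proof -
          have "s ** k = g' ** ((matinv g ** g) ** matinv g')" by (simp add: s_def k_def matrix_mul_assoc)
          then show ?thesis using ginv gi by simp
        qed
        have "s *v x0 = x0"
        proof -
          have "s *v x0 = s *v (k *v x0)" using kx by simp
          also have "\<dots> = x0" using sk by (simp add: matrix_vector_mul_assoc)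
          finally show ?thesis .
        qed
        moreover have "s ** g = g'"
        proof -
          have "s ** g = g' ** (matinv g ** g)" by (simp add: s_def matrix_mul_assoc)
          then show ?thesis using ginv by simp
        qed
        ultimately have "g' \<in> right_coset (Stab G x0) g"
          unfolding right_coset_def Stab_def using sG by blast
        then show False using nc g'_def by simp
      qed
      then have "norm (g' *v r - x0) < norm (k *v (g' *v r) - x0)" using I(1) kG FR_iff by blast
      then show False using kg \<open>norm (g *v r - x0) < norm (g' *v r - x0)\<close> by simp
    qed
  qed
  define P where "P = {p \<in> G \<times> G. matinv (fst p) *v x0 \<noteq> matinv (snd p) *v x0}"
  define D where "D = (\<lambda>p. norm (matinv (fst p) *v x0 - matinv (snd p) *v x0)) ` P"
  have Dfin: "finite D"
  proof -
    have "finite P" unfolding P_def using fin by simp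
    then show ?thesis unfolding D_def by simp
  qed
  have Dpos: "\<forall>t\<in>D. t > 0" unfolding D_def P_def by auto
  define \<delta> where "\<delta> = (if D = {} then 1 else Min D / 2)"
  have dpos: "\<delta> > 0"
  proof (cases "D = {}")
    case True then show ?thesis unfolding \<delta>_def by simp
  next
    case False then have "Min D \<in> D" using Dfin Min_in by blast
    then show ?thesis unfolding \<delta>_def using Dpos False by simp
  qed
  have dle: "2 * \<delta> \<le> t" if "t \<in> D" for t
  proof -
    have "D \<noteq> {}" using that by blast
    then show ?thesis using Min_le[OF Dfin that] unfolding \<delta>_def by simp
  qed
  have noise: "decodes_correctly_with_noise G x0 (subgroup_decode CL rk x0 m)"
    unfolding decodes_correctly_with_noise_def
  proof (intro exI[of _ \<delta>] conjI ballI allI impI)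
    show "\<delta> > 0" by (rule dpos)
    fix g r assume g: "g \<in> G" and r: "norm (r - matinv g *v x0) < \<delta>"
    have "\<forall>h\<in>G. h \<notin> right_coset (Stab G x0) g \<longrightarrow> norm (r - matinv g *v x0) < norm (r - matinv h *v x0)"
    proof (intro ballI impI)
      fix h assume h: "h \<in> G" "h \<notin> right_coset (Stab G x0) g"
      have ne: "matinv g *v x0 \<noteq> matinv h *v x0"
      proof
        assume eq: "matinv g *v x0 = matinv h *v x0"
        define s where "s = h ** matinv g"
        have ginv: "matinv g \<in> G" "matinv g ** g = mat 1" using group_inv[OF grp g] by blast+
        have hinv: "h ** matinv h = mat 1" using group_inv[OF grp h(1)] by blast
        have sG: "s \<in> G" using grp h ginv unfolding s_def is_group_def by blast
        have "s *v x0 = h *v (matinv h *v x0)" using eq by (simp add: s_def flip: matrix_vector_mul_assoc)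
        also have "\<dots> = x0" using hinv by (simp add: matrix_vector_mul_assoc)
        finally have sx: "s *v x0 = x0" .
        have "s ** g = h" using ginv by (simp add: s_def flip: matrix_mul_assoc)
        then have "h \<in> right_coset (Stab G x0) g" unfolding right_coset_def Stab_def using sG sx by blast
        then show False using h by simp
      qed
      then have "(g, h) \<in> P" unfolding P_def using g h by simp
      then have "norm (matinv g *v x0 - matinv h *v x0) \<in> D" unfolding D_def by force
      then have "2 * \<delta> \<le> norm (matinv g *v x0 - matinv h *v x0)" by (rule dle)
      moreover have "norm (matinv g *v x0 - matinv h *v x0) \<le> norm (r - matinv g *v x0) + norm (r - matinv h *v x0)"
      proof -
        have "matinv g *v x0 - matinv h *v x0 = (r - matinv h *v x0) - (r - matinv g *v x0)" by simp
        then show ?thesis using norm_triangle_ineq4[of "r - matinv h *v x0" "r - matinv g *v x0"] by simp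
      qed
      ultimately show "norm (r - matinv g *v x0) < norm (r - matinv h *v x0)" using r by linarith
    qed
    then show "subgroup_decode CL rk x0 m r \<in> right_coset (Stab G x0) g"
      using rob g unfolding decodes_robustly_def by blast
  qed
  show ?thesis using rob noise by blast
qed

end
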